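(* Suppose there exists $\rho$ such that for every metric space $M$ and every $s\in M$ for which $d(s,p)$ is the same for all $p\in M\setminus\{s\}$, the infinite server problem on $(M,s)$ admits a strictly $\rho$-competitive online algorithm. Then for every metric space $M$ and every $s\in M$ the infinite server problem on $(M,s)$ is competitive.
   Context: Infinite server problem on $(M,s)$: $M$ is a metric space with metric $d$ and $s\in M$ the source; an unbounded number of servers initially reside at $s$. A finite sequence of requests (points of $M$) is revealed one by one; each must be served immediately, without knowledge of future requests, by moving some server to it; the cost is the total distance traveled. An online algorithm $ALG$ is strictly $\rho$-competitive if $ALG(\sigma)\le\rho\,OPT(\sigma)$ for all request sequences $\sigma$; the problem is competitive if some online algorithm satisfies $ALG(\sigma)\le\rho'\,OPT(\sigma)+c$ for all $\sigma$, for some constants $\rho',c$. *)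

theory Defs
  imports "HOL-Analysis.Analysis"
begin

text \<open>Servers are indexed by natural numbers (an unbounded
supply); a configuration assigns a position to every server.\<close>

fun serve_cost :: "('a \<Rightarrow> 'a \<Rightarrow> real) \<Rightarrow> (nat \<Rightarrow> 'a) \<Rightarrow> ('a \<times> nat) list \<Rightarrow> real" where
  "serve_cost d conf [] = 0"
| "serve_cost d conf ((r, j) # rest) = d (conf j) r + serve_cost d (conf(j := r)) rest"

text \<open>A deterministic online algorithm: given the previously revealed requests and the
current request, it chooses which server to move to the current request.\<close>
type_synonym 'a online_alg = "'a list \<Rightarrow> 'a \<Rightarrow> nat"

definition alg_cost :: "('a \<Rightarrow> 'a \<Rightarrow> real) \<Rightarrow> 'a \<Rightarrow> 'a online_alg \<Rightarrow> 'a list \<Rightarrow> real" where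
  "alg_cost d s alg \<sigma> =
     serve_cost d (\<lambda>_. s) (zip \<sigma> (map (\<lambda>i. alg (take i \<sigma>) (\<sigma> ! i)) [0..<length \<sigma>]))"

definition opt_cost :: "('a \<Rightarrow> 'a \<Rightarrow> real) \<Rightarrow> 'a \<Rightarrow> 'a list \<Rightarrow> real" where
  "opt_cost d s \<sigma> =
     Inf {serve_cost d (\<lambda>_. s) (zip \<sigma> js) | js. length js = length \<sigma>}"

definition strictly_competitive_alg ::
    "'a set \<Rightarrow> ('a \<Rightarrow> 'a \<Rightarrow> real) \<Rightarrow> 'a \<Rightarrow> real \<Rightarrow> 'a online_alg \<Rightarrow> bool" where
  "strictly_competitive_alg M d s \<rho> alg \<longleftrightarrow>
     (\<forall>\<sigma>. set \<sigma> \<subseteq> M \<longrightarrow> alg_cost d s alg \<sigma> \<le> \<rho> * opt_cost d s \<sigma>)"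

definition infinite_server_competitive :: "'a set \<Rightarrow> ('a \<Rightarrow> 'a \<Rightarrow> real) \<Rightarrow> 'a \<Rightarrow> bool" where
  "infinite_server_competitive M d s \<longleftrightarrow>
     (\<exists>alg :: 'a online_alg. \<exists>\<rho>' c :: real.
        \<forall>\<sigma>. set \<sigma> \<subseteq> M \<longrightarrow> alg_cost d s alg \<sigma> \<le> \<rho>' * opt_cost d s \<sigma> + c)"

end

theory Submission
  imports Defs "HOL-Library.Nat_Bijection"
begin


lemma sc_cong:
  "(\<And>j. j \<in> snd ` set L \<Longrightarrow> conf j = conf' j) \<Longrightarrow> serve_cost d conf L = serve_cost d conf' L"
proof (induction L arbitrary: conf conf')
  case Nil then show ?case by simp
next
  case (Cons x L)
  obtain r j where x: "x = (r, j)" by (cases x)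
  have "conf j = conf' j" using Cons.prems x by force
  moreover have "serve_cost d (conf(j := r)) L = serve_cost d (conf'(j := r)) L"
    by (rule Cons.IH) (use Cons.prems in auto)
  ultimately show ?case by (simp add: x)
qed

lemma sc_split:
  "serve_cost d conf L = serve_cost d conf (filter (\<lambda>x. Q (snd x)) L)
     + serve_cost d conf (filter (\<lambda>x. \<not> Q (snd x)) L)"
proof (induction L arbitrary: conf)
  case Nil then show ?case by simp
next
  case (Cons x L)
  obtain r j where x: "x = (r, j)" by (cases x)
  show ?case
  proof (cases "Q j")
    case True
    have "serve_cost d (conf(j := r)) (filter (\<lambda>x. \<not> Q (snd x)) L)
        = serve_cost d conf (filter (\<lambda>x. \<not> Q (snd x)) L)"
      by (rule sc_cong) (use True in auto)
    moreover have "serve_cost d (conf(j := r)) L = serve_cost d (conf(j := r)) (filter (\<lambda>x. Q (snd x)) L)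
     + serve_cost d (conf(j := r)) (filter (\<lambda>x. \<not> Q (snd x)) L)" by (rule Cons.IH)
    ultimately show ?thesis using True by (simp add: x)
  next
    case False
    have "serve_cost d (conf(j := r)) (filter (\<lambda>x. Q (snd x)) L)
        = serve_cost d conf (filter (\<lambda>x. Q (snd x)) L)"
      by (rule sc_cong) (use False in auto)
    moreover have "serve_cost d (conf(j := r)) L = serve_cost d (conf(j := r)) (filter (\<lambda>x. Q (snd x)) L)
     + serve_cost d (conf(j := r)) (filter (\<lambda>x. \<not> Q (snd x)) L)" by (rule Cons.IH)
    ultimately show ?thesis using False by (simp add: x)
  qed
qed

lemma sc_sum:
  assumes "finite C" "\<forall>x\<in>set L. cls (snd x) \<in> C"
  shows "serve_cost d conf L = (\<Sum>c\<in>C. serve_cost d conf (filter (\<lambda>x. cls (snd x) = c) L))"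
  using assms
proof (induction C arbitrary: L rule: finite_induct)
  case empty
  then have "L = []" by (cases L) auto
  then show ?case by simp
next
  case (insert c C)
  let ?L2 = "filter (\<lambda>x. \<not> cls (snd x) = c) L"
  have h2: "\<forall>x\<in>set ?L2. cls (snd x) \<in> C" using insert.prems by auto
  have "serve_cost d conf L = serve_cost d conf (filter (\<lambda>x. cls (snd x) = c) L) + serve_cost d conf ?L2"
    by (rule sc_split)
  also have "serve_cost d conf ?L2 = (\<Sum>c'\<in>C. serve_cost d conf (filter (\<lambda>x. cls (snd x) = c') ?L2))"
    using insert.IH[OF h2] .
  also have "\<dots> = (\<Sum>c'\<in>C. serve_cost d conf (filter (\<lambda>x. cls (snd x) = c') L))"
  proof (rule sum.cong)
    fix c' assume "c' \<in> C"
    then have "c' \<noteq> c" using insert.hyps by auto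
    then have "filter (\<lambda>x. cls (snd x) = c') ?L2 = filter (\<lambda>x. cls (snd x) = c') L"
      by (induction L) auto
    then show "serve_cost d conf (filter (\<lambda>x. cls (snd x) = c') ?L2) = serve_cost d conf (filter (\<lambda>x. cls (snd x) = c') L)"
      by simp
  qed simp
  finally show ?case using insert.hyps by simp
qed

lemma sc_rename:
  "inj f \<Longrightarrow> serve_cost d conf (map (\<lambda>(r, j). (r, f j)) L) = serve_cost d (conf \<circ> f) L"
proof (induction L arbitrary: conf)
  case Nil then show ?case by simp
next
  case (Cons x L)
  obtain r j where x: "x = (r, j)" by (cases x)
  have "conf(f j := r) \<circ> f = (conf \<circ> f)(j := r)"
    using Cons.prems by (auto simp: fun_eq_iff inj_eq)
  have "serve_cost d conf (map (\<lambda>(r, j). (r, f j)) (x # L))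
     = d (conf (f j)) r + serve_cost d (conf(f j := r)) (map (\<lambda>(r, j). (r, f j)) L)"
    by (simp add: x)
  also have "serve_cost d (conf(f j := r)) (map (\<lambda>(r, j). (r, f j)) L) = serve_cost d (conf(f j := r) \<circ> f) L"
    by (rule Cons.IH[OF Cons.prems])
  also have "\<dots> = serve_cost d ((conf \<circ> f)(j := r)) L" by (simp only: \<open>conf(f j := r) \<circ> f = (conf \<circ> f)(j := r)\<close>)
  finally show ?case by (simp add: x comp_def)
qed

fun plen :: "('a \<Rightarrow> 'a \<Rightarrow> real) \<Rightarrow> 'a \<Rightarrow> 'a list \<Rightarrow> real" where
  "plen e a [] = 0"
| "plen e a (p # P) = e a p + plen e p P"

lemma sc_single: "serve_cost d conf (map (\<lambda>p. (p, j)) P) = plen d (conf j) P"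
  by (induction P arbitrary: conf) auto

lemma filter_snd_eq:
  "filter (\<lambda>x. snd x = j) L = map (\<lambda>p. (p, j)) (map fst (filter (\<lambda>x. snd x = j) L))"
  by (induction L) auto

lemma sc_servers:
  assumes "finite J" "snd ` set L \<subseteq> J"
  shows "serve_cost d conf L = (\<Sum>j\<in>J. plen d (conf j) (map fst (filter (\<lambda>x. snd x = j) L)))"
proof -
  have "serve_cost d conf L = (\<Sum>j\<in>J. serve_cost d conf (filter (\<lambda>x. id (snd x) = j) L))"
    by (rule sc_sum) (use assms in auto)
  also have "\<dots> = (\<Sum>j\<in>J. plen d (conf j) (map fst (filter (\<lambda>x. snd x = j) L)))"
  proof (rule sum.cong)
    fix j
    have "serve_cost d conf (filter (\<lambda>x. snd x = j) L)
        = serve_cost d conf (map (\<lambda>p. (p, j)) (map fst (filter (\<lambda>x. snd x = j) L)))"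
      by (subst filter_snd_eq) (rule refl)
    also have "\<dots> = plen d (conf j) (map fst (filter (\<lambda>x. snd x = j) L))" by (rule sc_single)
    finally show "serve_cost d conf (filter (\<lambda>x. id (snd x) = j) L) = plen d (conf j) (map fst (filter (\<lambda>x. snd x = j) L))"
      by simp
  qed simp
  finally show ?thesis .
qed

lemma sc_nonneg: "(\<And>a b. 0 \<le> e a b) \<Longrightarrow> 0 \<le> serve_cost e conf L"
proof (induction L arbitrary: conf)
  case (Cons x L) then show ?case by (cases x) (simp add: add_nonneg_nonneg)
qed simp

lemma plen_nonneg: "(\<And>a b. 0 \<le> e a b) \<Longrightarrow> 0 \<le> plen e a P"
  by (induction P arbitrary: a) (auto simp: add_nonneg_nonneg)

lemma plen_sum: "plen (\<lambda>a b. \<Sum>i\<in>I. e i a b) a P = (\<Sum>i\<in>I. plen (e i) a P)"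
  by (induction P arbitrary: a) (auto simp: sum.distrib)

lemma plen_scale: "plen (\<lambda>a b. c * e a b) a P = c * plen e a P"
  by (induction P arbitrary: a) (auto simp: algebra_simps)

lemma plen_mono:
  "(\<And>a b. a \<in> M \<Longrightarrow> b \<in> M \<Longrightarrow> e a b \<le> e' a b) \<Longrightarrow> a \<in> M \<Longrightarrow> set P \<subseteq> M
    \<Longrightarrow> plen e a P \<le> plen e' a P"
proof (induction P arbitrary: a)
  case (Cons p P)
  then have "e a p \<le> e' a p" "plen e p P \<le> plen e' p P" by auto
  then show ?case by simp
qed simp

definition choices :: "'a online_alg \<Rightarrow> 'a list \<Rightarrow> nat list" where
  "choices alg \<sigma> = map (\<lambda>k. alg (take k \<sigma>) (\<sigma> ! k)) [0..<length \<sigma>]"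

lemma alg_cost_choices: "alg_cost d s alg \<sigma> = serve_cost d (\<lambda>_. s) (zip \<sigma> (choices alg \<sigma>))"
  by (simp add: alg_cost_def choices_def)

lemma length_choices[simp]: "length (choices alg \<sigma>) = length \<sigma>"
  by (simp add: choices_def)

lemma choices_snoc: "choices alg (\<sigma> @ [r]) = choices alg \<sigma> @ [alg \<sigma> r]"
  by (auto simp: choices_def nth_append intro!: map_cong)

lemma choices_Nil[simp]: "choices alg [] = []"
  by (simp add: choices_def)

lemma map_fst_filter_zip:
  "length xs = length ys \<Longrightarrow> map fst (filter (\<lambda>x. P (fst x)) (zip xs ys)) = filter P xs"
  by (induction xs ys rule: list_induct2) auto

lemma map_fst_filter_comm:
  "map fst (filter (\<lambda>x. snd x = j) (filter (\<lambda>x. P (fst x)) L)) = filter P (map fst (filter (\<lambda>x. snd x = j) L))"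
  by (induction L) auto



locale isp = Metric_space M d for M :: "'a set" and d :: "'a \<Rightarrow> 'a \<Rightarrow> real" +
  fixes s :: 'a assumes sM: "s \<in> M"
begin

definition rg :: "'a \<Rightarrow> int" where "rg p = \<lceil>log 2 (d s p)\<rceil>"
definition inR :: "int \<Rightarrow> 'a \<Rightarrow> bool" where "inR i p \<longleftrightarrow> p \<noteq> s \<and> rg p = i"
definition tt :: "int \<Rightarrow> real" where "tt i = 2 powr (real_of_int i - 2)"
definition ww :: "int \<Rightarrow> 'a \<Rightarrow> real" where
  "ww i p = max 0 (min (tt i) (min (d s p - tt i) (5 * tt i - d s p)))"
definition ee :: "int \<Rightarrow> 'a \<Rightarrow> 'a \<Rightarrow> real" where
  "ee i p q = min (d p q) (ww i p + ww i q)"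
definition dd :: "int \<Rightarrow> 'a \<Rightarrow> 'a \<Rightarrow> real" where
  "dd i p q = (if p = q then 0 else if p = s \<or> q = s then 4 * tt i else ee i p q)"
definition Mi :: "int \<Rightarrow> 'a set" where "Mi i = {p \<in> M. p = s \<or> inR i p}"

lemma tt_pos: "0 < tt i" by (simp add: tt_def)

lemma pow_i: "2 powr (real_of_int i) = 4 * tt i"
proof -
  have "2 powr (real_of_int i) = 2 powr (real_of_int i - 2 + 2)" by simp
  also have "\<dots> = 2 powr (real_of_int i - 2) * 2 powr 2" by (rule powr_add)
  finally show ?thesis by (simp add: tt_def)
qed

lemma pow_im1: "2 powr (real_of_int i - 1) = 2 * tt i"
proof -
  have "2 powr (real_of_int i - 1) = 2 powr (real_of_int i - 2 + 1)" by simp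
  also have "\<dots> = 2 powr (real_of_int i - 2) * 2 powr 1" by (rule powr_add)
  finally show ?thesis by (simp add: tt_def)
qed

lemma pow_ip1: "2 powr (real_of_int i + 1) = 8 * tt i"
proof -
  have "2 powr (real_of_int i + 1) = 2 powr (real_of_int i) * 2 powr 1" by (rule powr_add)
  then show ?thesis by (simp add: pow_i)
qed

lemma dist_pos: assumes a: "p \<in> M" "p \<noteq> s" shows "0 < d s p"
proof -
  have "d s p \<noteq> 0" using zero[OF sM a(1)] a(2) by auto
  then show ?thesis using nonneg[of s p] by linarith
qed

lemma ring_bounds:
  assumes "p \<in> M" "inR i p"
  shows "2 * tt i < d s p" "d s p \<le> 4 * tt i"
proof -
  have ps: "p \<noteq> s" and ri: "rg p = i" using assms by (auto simp: inR_def)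
  define x where "x = d s p"
  have x0: "0 < x" using dist_pos[OF assms(1) ps] by (simp add: x_def)
  have r: "\<lceil>log 2 x\<rceil> = i" using ri by (simp add: rg_def x_def)
  have c1: "log 2 x \<le> real_of_int i" using r le_of_int_ceiling[of "log 2 x"] by simp
  have "i - 1 < \<lceil>log 2 x\<rceil>" using r by simp
  then have c2: "real_of_int i - 1 < log 2 x" by (simp only: less_ceiling_iff)
  have "x = 2 powr (log 2 x)" using x0 by (simp add: powr_log_cancel)
  also have "\<dots> \<le> 2 powr (real_of_int i)" by (rule powr_mono[OF c1]) simp
  finally show "d s p \<le> 4 * tt i" by (simp add: x_def pow_i)
  have "2 powr (real_of_int i - 1) < 2 powr (log 2 x)" by (rule powr_less_mono[OF c2]) simp
  also have "\<dots> = x" using x0 by (simp add: powr_log_cancel)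
  finally show "2 * tt i < d s p" by (simp add: x_def pow_im1)
qed

lemma ww_ring: "p \<in> M \<Longrightarrow> inR i p \<Longrightarrow> ww i p = tt i"
  using ring_bounds[of p i] tt_pos[of i] by (simp add: ww_def)

lemma ww_nonneg: "0 \<le> ww i p" by (simp add: ww_def)

lemma ww_lip:
  assumes "p \<in> M" "q \<in> M"
  shows "\<bar>ww i p - ww i q\<bar> \<le> d p q"
proof -
  have t1: "d s p \<le> d s q + d q p" using triangle[OF sM assms(2) assms(1)] .
  have t2: "d s q \<le> d s p + d p q" using triangle[OF sM assms(1) assms(2)] .
  have c: "d q p = d p q" by (rule commute)
  have "\<bar>d s p - d s q\<bar> \<le> d p q" using t1 t2 c by linarith
  then show ?thesis unfolding ww_def by (simp add: max_def min_def abs_le_iff)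
qed

lemma ee_nonneg: "0 \<le> ee i p q" by (simp add: ee_def ww_nonneg)
lemma ee_sym: "ee i p q = ee i q p" by (simp add: ee_def commute add.commute)
lemma ee_refl: "p \<in> M \<Longrightarrow> ee i p p = 0"
  using ww_nonneg[of i p] by (simp add: ee_def)
lemma ee_le_d: "ee i p q \<le> d p q" by (simp add: ee_def)

lemma ee_tri:
  assumes "p \<in> M" "q \<in> M" "r \<in> M"
  shows "ee i p r \<le> ee i p q + ee i q r"
proof -
  have "d p r \<le> d p q + d q r" by (rule triangle[OF assms])
  moreover have "\<bar>ww i p - ww i q\<bar> \<le> d p q" "\<bar>ww i q - ww i r\<bar> \<le> d q r"
    using ww_lip assms by auto
  moreover have "0 \<le> ww i q" by (rule ww_nonneg)
  ultimately show ?thesis unfolding ee_def by (simp add: min_def abs_le_iff)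
qed

lemma ee_ring: "p \<in> M \<Longrightarrow> q \<in> M \<Longrightarrow> inR i p \<Longrightarrow> inR i q \<Longrightarrow> ee i p q = min (d p q) (2 * tt i)"
  by (simp add: ee_def ww_ring)

lemma dd_metric: "Metric_space (Mi i) (dd i)"
proof
  fix x y show "0 \<le> dd i x y" using tt_pos[of i] ee_nonneg[of i x y] by (simp add: dd_def)
next
  fix x y show "dd i x y = dd i y x" by (auto simp: dd_def ee_sym)
next
  fix x y assume x: "x \<in> Mi i" and y: "y \<in> Mi i"
  show "dd i x y = 0 \<longleftrightarrow> x = y"
  proof
    assume h: "dd i x y = 0"
    show "x = y"
    proof (rule ccontr)
      assume xy: "x \<noteq> y"
      show False
      proof (cases "x = s \<or> y = s")
        case True then show False using h xy tt_pos[of i] by (simp add: dd_def)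
      next
        case False
        then have "inR i x" "inR i y" "x \<in> M" "y \<in> M" using x y by (auto simp: Mi_def)
        then have "ee i x y = min (d x y) (2 * tt i)" by (simp add: ee_ring)
        moreover have "0 < d x y" using zero[of x y] nonneg[of x y] xy \<open>x \<in> M\<close> \<open>y \<in> M\<close> by auto
        ultimately show False using h xy False tt_pos[of i] by (simp add: dd_def)
      qed
    qed
  qed (simp add: dd_def)
next
  fix x y z assume x: "x \<in> Mi i" and y: "y \<in> Mi i" and z: "z \<in> Mi i"
  have xM: "x \<in> M" and yM: "y \<in> M" and zM: "z \<in> M" using x y z by (auto simp: Mi_def)
  have nn: "\<And>a b. 0 \<le> dd i a b" using tt_pos[of i] ee_nonneg by (simp add: dd_def)
  have bnd: "\<And>a b. a \<in> Mi i \<Longrightarrow> b \<in> Mi i \<Longrightarrow> a \<noteq> s \<Longrightarrow> b \<noteq> s \<Longrightarrow> dd i a b \<le> 2 * tt i"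
  proof -
    fix a b assume a: "a \<in> Mi i" and b: "b \<in> Mi i" and as: "a \<noteq> s" and bs: "b \<noteq> s"
    then have "inR i a" "inR i b" "a \<in> M" "b \<in> M" by (auto simp: Mi_def)
    then show "dd i a b \<le> 2 * tt i" using tt_pos[of i] as bs by (simp add: dd_def ee_ring)
  qed
  show "dd i x z \<le> dd i x y + dd i y z"
  proof (cases "x = z")
    case True then show ?thesis using nn[of x y] nn[of y z] by (simp add: dd_def)
  next
    case xz: False
    show ?thesis
    proof (cases "x = y \<or> y = z")
      case True then show ?thesis using nn[of x y] nn[of y z] by (auto simp: dd_def)
    next
      case False
      then have xy: "x \<noteq> y" and yz: "y \<noteq> z" by auto
      show ?thesis
      proof (cases "x = s \<or> z = s")
        case True then show ?thesis using xy yz xz nn[of x y] nn[of y z] by (auto simp: dd_def)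
      next
        case False
        then have xs: "x \<noteq> s" and zs: "z \<noteq> s" by auto
        show ?thesis
        proof (cases "y = s")
          case True
          then show ?thesis using bnd[OF x z xs zs] nn[of y z] xy tt_pos[of i] by (simp add: dd_def)
        next
          case ys: False
          show ?thesis using ee_tri[OF xM yM zM, of i] xs ys zs xy yz xz by (simp add: dd_def)
        qed
      qed
    qed
  qed
qed

lemma s_Mi: "s \<in> Mi i" by (simp add: Mi_def sM)

lemma dd_equi: "\<forall>p \<in> Mi i - {s}. \<forall>q \<in> Mi i - {s}. dd i s p = dd i s q"
  by (simp add: dd_def)

lemma d_le_dd:
  assumes "p \<in> Mi i" "q \<in> Mi i"
  shows "d p q \<le> 4 * dd i p q"
proof -
  have pM: "p \<in> M" and qM: "q \<in> M" using assms by (auto simp: Mi_def)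
  show ?thesis
  proof (cases "p = q")
    case True then show ?thesis using zero[OF pM pM] by (simp add: dd_def)
  next
    case pq: False
    show ?thesis
    proof (cases "p = s")
      case True
      then have "inR i q" using assms pq by (auto simp: Mi_def)
      have "d s q \<le> 4 * tt i" by (rule ring_bounds(2)[OF qM \<open>inR i q\<close>])
      moreover have "dd i p q = 4 * tt i" using True pq by (simp add: dd_def)
      ultimately show ?thesis using True tt_pos[of i] by simp
    next
      case ps: False
      show ?thesis
      proof (cases "q = s")
        case True
        then have "inR i p" using assms pq by (auto simp: Mi_def)
        have "d s p \<le> 4 * tt i" by (rule ring_bounds(2)[OF pM \<open>inR i p\<close>])
        moreover have "dd i p q = 4 * tt i" using True pq by (simp add: dd_def)
        ultimately show ?thesis using True tt_pos[of i] commute[of p s] by simp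
      next
        case qs: False
        then have ip: "inR i p" and iq: "inR i q" using assms ps by (auto simp: Mi_def)
        have "d p q \<le> d p s + d s q" by (rule triangle[OF pM sM qM])
        then have "d p q \<le> 8 * tt i" using ring_bounds[OF pM ip] ring_bounds[OF qM iq] commute[of p s] by linarith
        then show ?thesis using ps qs pq ee_ring[OF pM qM ip iq] nonneg[of p q] by (simp add: dd_def min_def)
      qed
    qed
  qed
qed

lemma dd_ring: "p \<in> M \<Longrightarrow> q \<in> M \<Longrightarrow> inR i p \<Longrightarrow> inR i q \<Longrightarrow> dd i p q = ee i p q"
  by (auto simp: dd_def ee_refl inR_def)

lemma ww_support:
  assumes "0 < ww i p"
  shows "i \<in> {\<lfloor>log 2 (d s p)\<rfloor> .. \<lfloor>log 2 (d s p)\<rfloor> + 2}"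
proof -
  define x where "x = d s p"
  have a: "tt i < x" "x < 5 * tt i" using assms by (auto simp: ww_def x_def max_def min_def split: if_splits)
  have x0: "0 < x" using a tt_pos[of i] by linarith
  have "log 2 (tt i) < log 2 x" using a x0 tt_pos[of i] by simp
  then have l1: "real_of_int i - 2 < log 2 x" by (simp add: tt_def)
  have "x < 2 powr (real_of_int i + 1)" using a tt_pos[of i] by (simp add: pow_ip1)
  then have "log 2 x < log 2 (2 powr (real_of_int i + 1))" using x0 by (subst log_less_cancel_iff) auto
  then have l2: "log 2 x < real_of_int i + 1" by simp
  have "i - 2 \<le> \<lfloor>log 2 x\<rfloor>" using l1 by (simp add: le_floor_iff)
  moreover have "\<lfloor>log 2 x\<rfloor> \<le> i" using l2 by (simp add: floor_le_iff)
  ultimately show ?thesis by (simp add: x_def)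
qed

lemma sum_ee:
  assumes "finite I" "a \<in> M" "b \<in> M"
  shows "(\<Sum>i\<in>I. ee i a b) \<le> 6 * d a b"
proof -
  define fa where "fa = \<lfloor>log 2 (d s a)\<rfloor>"
  define fb where "fb = \<lfloor>log 2 (d s b)\<rfloor>"
  define U where "U = {fa..fa+2} \<union> {fb..fb+2}"
  have fU: "finite U" by (simp add: U_def)
  have cU: "card U \<le> 6"
  proof -
    have "card U \<le> card {fa..fa+2} + card {fb..fb+2}" unfolding U_def by (rule card_Un_le)
    then show ?thesis by simp
  qed
  have z: "\<And>i. i \<notin> U \<Longrightarrow> ee i a b = 0"
  proof -
    fix i assume "i \<notin> U"
    then have "\<not> 0 < ww i a" "\<not> 0 < ww i b" using ww_support[of i a] ww_support[of i b]
      by (auto simp: U_def fa_def fb_def)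
    then have "ww i a = 0" "ww i b = 0" using ww_nonneg[of i a] ww_nonneg[of i b] by auto
    then show "ee i a b = 0" using nonneg[of a b] by (simp add: ee_def)
  qed
  have "(\<Sum>i\<in>I. ee i a b) = (\<Sum>i\<in>I \<inter> U. ee i a b) + (\<Sum>i\<in>I - U. ee i a b)"
    using assms(1) by (rule sum.Int_Diff)
  also have "(\<Sum>i\<in>I - U. ee i a b) = 0" using z by simp
  also have "(\<Sum>i\<in>I \<inter> U. ee i a b) \<le> (\<Sum>i\<in>I \<inter> U. d a b)" by (rule sum_mono) (rule ee_le_d)
  also have "\<dots> = real (card (I \<inter> U)) * d a b" by simp
  also have "\<dots> \<le> real (card U) * d a b"
    by (rule mult_right_mono) (simp_all add: card_mono fU)
  also have "\<dots> \<le> 6 * d a b" using cU by (intro mult_right_mono) simp_all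
  finally show ?thesis by simp
qed

end


lemma geo_half: "(\<Sum>n<N. (1/2::real)^n) = 2 - 2 * (1/2)^N"
  by (induction N) auto

context isp begin

lemma plen_tri:
  assumes "a \<in> M" "b \<in> M" "set P \<subseteq> M"
  shows "plen (ee i) a P \<le> ee i a b + plen (ee i) b P"
proof (cases P)
  case Nil then show ?thesis by (simp add: ee_nonneg)
next
  case (Cons q Q)
  then have "q \<in> M" using assms by auto
  then show ?thesis using ee_tri[OF assms(1,2) \<open>q \<in> M\<close>, of i] Cons by simp
qed

lemma PA:
  assumes "a \<in> M" "inR i a" "set P \<subseteq> M"
  shows "plen (dd i) a (filter (inR i) P) \<le> plen (ee i) a P"
  using assms
proof (induction P arbitrary: a)
  case Nil then show ?case by simp
next
  case (Cons p P)
  have pM: "p \<in> M" and PM: "set P \<subseteq> M" using Cons.prems by auto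
  show ?case
  proof (cases "inR i p")
    case True
    have "plen (dd i) p (filter (inR i) P) \<le> plen (ee i) p P" using Cons.IH[OF pM True PM] .
    moreover have "dd i a p = ee i a p" using dd_ring[OF Cons.prems(1) pM Cons.prems(2) True] .
    ultimately show ?thesis using True by simp
  next
    case False
    have "plen (dd i) a (filter (inR i) P) \<le> plen (ee i) a P" using Cons.IH[OF Cons.prems(1,2) PM] .
    also have "\<dots> \<le> ee i a p + plen (ee i) p P" by (rule plen_tri[OF Cons.prems(1) pM PM])
    finally show ?thesis using False by simp
  qed
qed

lemma PB:
  assumes "set P \<subseteq> M"
  shows "plen (dd i) s (filter (inR i) P) \<le> (if \<exists>p\<in>set P. inR i p then 4 * tt i else 0) + plen (ee i) s P"
  using assms
proof (induction P)
  case Nil then show ?case by simp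
next
  case (Cons p P)
  have pM: "p \<in> M" and PM: "set P \<subseteq> M" using Cons.prems by auto
  show ?case
  proof (cases "inR i p")
    case True
    then have ps: "p \<noteq> s" by (simp add: inR_def)
    have "plen (dd i) p (filter (inR i) P) \<le> plen (ee i) p P" using PA[OF pM True PM] .
    moreover have "dd i s p = 4 * tt i" using ps by (simp add: dd_def)
    moreover have "0 \<le> ee i s p" by (rule ee_nonneg)
    ultimately show ?thesis using True by simp
  next
    case False
    have "plen (dd i) s (filter (inR i) P) \<le> (if \<exists>p\<in>set P. inR i p then 4 * tt i else 0) + plen (ee i) s P"
      using Cons.IH[OF PM] .
    moreover have "plen (ee i) s P \<le> ee i s p + plen (ee i) p P" by (rule plen_tri[OF sM pM PM])
    moreover have "0 \<le> 4 * tt i" using tt_pos[of i] by simp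
    ultimately show ?thesis using False by (auto split: if_splits)
  qed
qed

lemma PC:
  assumes "a \<in> M" "set P \<subseteq> M" "p \<in> set P"
  shows "d a p \<le> plen d a P"
  using assms
proof (induction P arbitrary: a)
  case Nil then show ?case by simp
next
  case (Cons q Q)
  have qM: "q \<in> M" and QM: "set Q \<subseteq> M" using Cons.prems by auto
  show ?case
  proof (cases "p = q")
    case True
    then show ?thesis using plen_nonneg[of d q Q] by simp
  next
    case False
    then have "d q p \<le> plen d q Q" using Cons.IH[OF qM QM] Cons.prems(3) by simp
    moreover have "d a p \<le> d a q + d q p" using triangle[OF Cons.prems(1) qM] Cons.prems by auto
    ultimately show ?thesis by simp
  qed
qed

lemma tt_shift: "tt (m - int n) = tt m * (1/2)^n"
proof -
  have "tt (m - int n) = 2 powr (real_of_int m - 2 - real n)" unfolding tt_def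
    by (rule arg_cong[where f="\<lambda>x. 2 powr x"]) simp
  also have "\<dots> = 2 powr (real_of_int m - 2) / 2 powr (real n)" by (rule powr_diff)
  also have "2 powr (real n) = (2::real)^n" by (rule powr_realpow) simp
  also have "2 powr (real_of_int m - 2) / (2::real)^n = tt m * (1/2)^n"
    by (simp only: tt_def power_one_over times_divide_eq_right mult_1_right)
  finally show ?thesis .
qed

lemma geo_tt:
  assumes "finite K" "\<forall>k\<in>K. k \<le> m"
  shows "(\<Sum>k\<in>K. tt k) \<le> 2 * tt m"
proof (cases "K = {}")
  case True then show ?thesis using tt_pos[of m] by simp
next
  case False
  define N where "N = Suc (nat (m - Min K))"
  define g where "g = (\<lambda>n::nat. m - int n)"
  have sub: "K \<subseteq> g ` {..<N}"
  proof
    fix k assume k: "k \<in> K"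
    have "Min K \<le> k" using assms(1) k by simp
    then have "nat (m - k) < N" unfolding N_def using assms(2) k by auto
    moreover have "k = g (nat (m - k))" unfolding g_def using assms(2) k by auto
    ultimately show "k \<in> g ` {..<N}" by blast
  qed
  have inj: "inj_on g {..<N}" by (simp add: g_def inj_on_def)
  have "(\<Sum>k\<in>K. tt k) \<le> (\<Sum>k\<in>g ` {..<N}. tt k)"
    by (rule sum_mono2) (simp_all add: sub less_imp_le[OF tt_pos])
  also have "\<dots> = (\<Sum>n<N. tt (g n))" by (rule sum.reindex_cong[OF inj refl]) simp
  also have "\<dots> = tt m * (\<Sum>n<N. (1/2)^n)" by (simp add: g_def tt_shift sum_distrib_left)
  also have "\<dots> \<le> tt m * 2" using tt_pos[of m] by (intro mult_left_mono) (simp_all add: geo_half)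
  finally show ?thesis by simp
qed

lemma FV:
  assumes "finite I" "set P \<subseteq> M"
  shows "(\<Sum>i\<in>I. if \<exists>p\<in>set P. inR i p then 4 * tt i else 0) \<le> 4 * plen d s P"
proof -
  define K where "K = {i\<in>I. \<exists>p\<in>set P. inR i p}"
  have fK: "finite K" using assms(1) by (simp add: K_def)
  have "(\<Sum>i\<in>I. if \<exists>p\<in>set P. inR i p then 4 * tt i else 0) = (\<Sum>i\<in>K. 4 * tt i)"
    unfolding K_def using assms(1) by (simp add: sum.inter_filter)
  also have "\<dots> \<le> 4 * plen d s P"
  proof (cases "K = {}")
    case True then show ?thesis using plen_nonneg[of d s P] by simp
  next
    case False
    define m where "m = Max K"
    have "m \<in> K" using fK False by (simp add: m_def)
    then obtain p where p: "p \<in> set P" "inR m p" by (auto simp: K_def)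
    have pM: "p \<in> M" using p assms(2) by auto
    have "2 * tt m < d s p" by (rule ring_bounds(1)[OF pM p(2)])
    also have "\<dots> \<le> plen d s P" by (rule PC[OF sM assms(2) p(1)])
    finally have a: "2 * tt m < plen d s P" .
    have "(\<Sum>i\<in>K. tt i) \<le> 2 * tt m" by (rule geo_tt[OF fK]) (simp add: m_def fK)
    then show ?thesis using a by (simp add: sum_distrib_left[symmetric])
  qed
  finally show ?thesis .
qed

lemma PM:
  assumes "finite I" "set P \<subseteq> M"
  shows "(\<Sum>i\<in>I. plen (dd i) s (filter (inR i) P)) \<le> 10 * plen d s P"
proof -
  have "(\<Sum>i\<in>I. plen (dd i) s (filter (inR i) P))
      \<le> (\<Sum>i\<in>I. (if \<exists>p\<in>set P. inR i p then 4 * tt i else 0) + plen (ee i) s P)"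
    by (rule sum_mono) (rule PB[OF assms(2)])
  also have "\<dots> = (\<Sum>i\<in>I. if \<exists>p\<in>set P. inR i p then 4 * tt i else 0) + (\<Sum>i\<in>I. plen (ee i) s P)"
    by (rule sum.distrib)
  also have "(\<Sum>i\<in>I. plen (ee i) s P) = plen (\<lambda>a b. \<Sum>i\<in>I. ee i a b) s P"
    by (rule plen_sum[symmetric])
  also have "\<dots> \<le> plen (\<lambda>a b. 6 * d a b) s P"
    by (rule plen_mono[OF _ sM assms(2)]) (rule sum_ee[OF assms(1)])
  also have "\<dots> = 6 * plen d s P" by (rule plen_scale)
  finally show ?thesis using FV[OF assms] by linarith
qed

end


definition enc :: "int \<Rightarrow> nat \<Rightarrow> nat" where
  "enc i k = Suc (prod_encode (int_encode i, k))"
definition cls :: "nat \<Rightarrow> int option" where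
  "cls j = (case j of 0 \<Rightarrow> None | Suc n \<Rightarrow> Some (int_decode (fst (prod_decode n))))"

lemma cls_enc[simp]: "cls (enc i k) = Some i" by (simp add: cls_def enc_def)
lemma cls_0[simp]: "cls 0 = None" by (simp add: cls_def)
lemma inj_enc: "inj (enc i)"
proof (rule injI)
  fix x y assume "enc i x = enc i y"
  then have "prod_decode (prod_encode (int_encode i, x)) = prod_decode (prod_encode (int_encode i, y))"
    by (simp add: enc_def)
  then show "x = y" by simp
qed

context isp begin

definition comb :: "(int \<Rightarrow> 'a online_alg) \<Rightarrow> 'a online_alg" where
  "comb alg h r = (if r = s then 0 else enc (rg r) (alg (rg r) (filter (inR (rg r)) h) r))"

lemma cls_comb: "cls (comb alg h r) = (if r = s then None else Some (rg r))"
  by (simp add: comb_def)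

lemma ALGF:
  "filter (\<lambda>x. cls (snd x) = Some i) (zip \<sigma> (choices (comb alg) \<sigma>))
   = map (\<lambda>(r, j). (r, enc i j)) (zip (filter (inR i) \<sigma>) (choices (alg i) (filter (inR i) \<sigma>)))"
proof (induction \<sigma> rule: rev_induct)
  case Nil then show ?case by simp
next
  case (snoc r \<sigma>)
  show ?case
  proof (cases "inR i r")
    case True
    then have "r \<noteq> s" "rg r = i" by (auto simp: inR_def)
    then show ?thesis using snoc True by (simp add: choices_snoc cls_comb comb_def)
  next
    case False
    then have "cls (comb alg \<sigma> r) \<noteq> Some i" by (auto simp: cls_comb inR_def)
    then show ?thesis using snoc False by (simp add: choices_snoc)
  qed
qed

lemma ALGN:
  "filter (\<lambda>x. cls (snd x) = None) (zip \<sigma> (choices (comb alg) \<sigma>))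
   = map (\<lambda>p. (p, 0)) (filter (\<lambda>r. r = s) \<sigma>)"
proof (induction \<sigma> rule: rev_induct)
  case Nil then show ?case by simp
next
  case (snoc r \<sigma>)
  then show ?case by (cases "r = s") (simp_all add: choices_snoc cls_comb comb_def)
qed

lemma ALGC:
  "\<forall>x\<in>set (zip \<sigma> (choices (comb alg) \<sigma>)). cls (snd x) = (if fst x = s then None else Some (rg (fst x)))"
proof (induction \<sigma> rule: rev_induct)
  case Nil then show ?case by simp
next
  case (snoc r \<sigma>)
  then show ?case by (simp add: choices_snoc cls_comb)
qed

lemma plen_s: "\<forall>p\<in>set P. p = s \<Longrightarrow> plen d s P = 0"
  by (induction P) (auto simp: sM)

lemma sc_le4:
  "(\<forall>j. conf j \<in> Mi i) \<Longrightarrow> (\<forall>x\<in>set L. fst x \<in> Mi i)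
   \<Longrightarrow> serve_cost d conf L \<le> 4 * serve_cost (dd i) conf L"
proof (induction L arbitrary: conf)
  case Nil then show ?case by simp
next
  case (Cons x L)
  obtain r j where x: "x = (r, j)" by (cases x)
  have r: "r \<in> Mi i" using Cons.prems x by auto
  have "d (conf j) r \<le> 4 * dd i (conf j) r" using d_le_dd Cons.prems(1) r by auto
  moreover have "serve_cost d (conf(j := r)) L \<le> 4 * serve_cost (dd i) (conf(j := r)) L"
    by (rule Cons.IH) (use Cons.prems r in auto)
  ultimately show ?case by (simp add: x)
qed

lemma OPTS:
  assumes "finite I" "\<forall>x\<in>set L. fst x \<in> M"
  shows "(\<Sum>i\<in>I. serve_cost (dd i) (\<lambda>_. s) (filter (\<lambda>x. inR i (fst x)) L)) \<le> 10 * serve_cost d (\<lambda>_. s) L"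
proof -
  define J where "J = snd ` set L"
  have fJ: "finite J" by (simp add: J_def)
  define P where "P j = map fst (filter (\<lambda>x. snd x = j) L)" for j
  have PjM: "set (P j) \<subseteq> M" for j using assms(2) by (auto simp: P_def)
  have "(\<Sum>i\<in>I. serve_cost (dd i) (\<lambda>_. s) (filter (\<lambda>x. inR i (fst x)) L))
      = (\<Sum>i\<in>I. \<Sum>j\<in>J. plen (dd i) s (filter (inR i) (P j)))"
  proof (rule sum.cong[OF refl])
    fix i
    have "serve_cost (dd i) (\<lambda>_. s) (filter (\<lambda>x. inR i (fst x)) L)
      = (\<Sum>j\<in>J. plen (dd i) s (map fst (filter (\<lambda>x. snd x = j) (filter (\<lambda>x. inR i (fst x)) L))))"
      by (rule sc_servers[OF fJ]) (auto simp: J_def)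
    then show "serve_cost (dd i) (\<lambda>_. s) (filter (\<lambda>x. inR i (fst x)) L)
      = (\<Sum>j\<in>J. plen (dd i) s (filter (inR i) (P j)))"
      by (simp only: map_fst_filter_comm P_def)
  qed
  also have "\<dots> = (\<Sum>j\<in>J. \<Sum>i\<in>I. plen (dd i) s (filter (inR i) (P j)))" by (rule sum.swap)
  also have "\<dots> \<le> (\<Sum>j\<in>J. 10 * plen d s (P j))"
    by (rule sum_mono) (rule PM[OF assms(1) PjM])
  also have "\<dots> = 10 * (\<Sum>j\<in>J. plen d s (P j))" by (simp add: sum_distrib_left)
  also have "(\<Sum>j\<in>J. plen d s (P j)) = serve_cost d (\<lambda>_. s) L"
    unfolding P_def by (rule sc_servers[symmetric]) (simp_all add: J_def)
  finally show ?thesis .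
qed

lemma opt_nonneg_gen: "(\<And>a b. 0 \<le> e a b) \<Longrightarrow> 0 \<le> opt_cost e s \<sigma>"
  unfolding opt_cost_def
  by (rule cInf_greatest) (auto intro: sc_nonneg exI[of _ "replicate (length \<sigma>) 0"])

lemma opt_le:
  assumes "(\<And>a b. 0 \<le> e a b)" "length js = length \<sigma>"
  shows "opt_cost e s \<sigma> \<le> serve_cost e (\<lambda>_. s) (zip \<sigma> js)"
  unfolding opt_cost_def
proof (rule cInf_lower)
  show "serve_cost e (\<lambda>_. s) (zip \<sigma> js) \<in> {serve_cost e (\<lambda>_. s) (zip \<sigma> js) |js. length js = length \<sigma>}"
    using assms(2) by blast
  show "bdd_below {serve_cost e (\<lambda>_. s) (zip \<sigma> js) |js. length js = length \<sigma>}"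
    by (rule bdd_belowI[of _ 0]) (auto intro: sc_nonneg assms(1))
qed

lemma dd_nonneg: "0 \<le> dd i a b"
  using tt_pos[of i] ee_nonneg[of i a b] by (simp add: dd_def)

lemma OPTLB:
  assumes "finite I" "set \<sigma> \<subseteq> M"
  shows "(\<Sum>i\<in>I. opt_cost (dd i) s (filter (inR i) \<sigma>)) \<le> 10 * opt_cost d s \<sigma>"
proof -
  let ?S = "{serve_cost d (\<lambda>_. s) (zip \<sigma> js) |js. length js = length \<sigma>}"
  have ne: "?S \<noteq> {}" by (auto intro: exI[of _ "replicate (length \<sigma>) 0"])
  have "(\<Sum>i\<in>I. opt_cost (dd i) s (filter (inR i) \<sigma>)) / 10 \<le> Inf ?S"
  proof (rule cInf_greatest[OF ne])
    fix v assume "v \<in> ?S"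
    then obtain js where js: "length js = length \<sigma>" and v: "v = serve_cost d (\<lambda>_. s) (zip \<sigma> js)" by blast
    have "(\<Sum>i\<in>I. opt_cost (dd i) s (filter (inR i) \<sigma>))
        \<le> (\<Sum>i\<in>I. serve_cost (dd i) (\<lambda>_. s) (filter (\<lambda>x. inR i (fst x)) (zip \<sigma> js)))"
    proof (rule sum_mono)
      fix i
      let ?F = "filter (\<lambda>x. inR i (fst x)) (zip \<sigma> js)"
      have e1: "map fst ?F = filter (inR i) \<sigma>" using js by (simp add: map_fst_filter_zip)
      have "opt_cost (dd i) s (map fst ?F) \<le> serve_cost (dd i) (\<lambda>_. s) (zip (map fst ?F) (map snd ?F))"
        by (rule opt_le) (simp_all add: dd_nonneg)
      also have "zip (map fst ?F) (map snd ?F) = ?F" by (rule zip_map_fst_snd)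
      finally show "opt_cost (dd i) s (filter (inR i) \<sigma>) \<le> serve_cost (dd i) (\<lambda>_. s) ?F"
        by (simp only: e1)
    qed
    also have "\<dots> \<le> 10 * serve_cost d (\<lambda>_. s) (zip \<sigma> js)"
      by (rule OPTS[OF assms(1)]) (use assms(2) in \<open>auto dest: set_zip_leftD\<close>)
    finally show "(\<Sum>i\<in>I. opt_cost (dd i) s (filter (inR i) \<sigma>)) / 10 \<le> v" using v by simp
  qed
  then show ?thesis by (simp add: opt_cost_def)
qed

lemma main:
  assumes H: "\<And>i. strictly_competitive_alg (Mi i) (dd i) s \<rho> (alg i)"
  shows "infinite_server_competitive M d s"
proof -
  define \<rho>p where "\<rho>p = max \<rho> 0"
  have "\<forall>\<sigma>. set \<sigma> \<subseteq> M \<longrightarrow> alg_cost d s (comb alg) \<sigma> \<le> (40 * \<rho>p) * opt_cost d s \<sigma> + 0"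
  proof (intro allI impI)
    fix \<sigma> assume \<sigma>M: "set \<sigma> \<subseteq> M"
    define I where "I = rg ` {p \<in> set \<sigma>. p \<noteq> s}"
    have fI: "finite I" by (simp add: I_def)
    define L where "L = zip \<sigma> (choices (comb alg) \<sigma>)"
    have cl: "\<forall>x\<in>set L. cls (snd x) \<in> insert None (Some ` I)"
    proof
      fix x assume x: "x \<in> set L"
      then have "fst x \<in> set \<sigma>" using set_zip_leftD[of "fst x" "snd x"] by (simp add: L_def)
      then show "cls (snd x) \<in> insert None (Some ` I)" using ALGC[of \<sigma> alg] x
        by (auto simp: L_def I_def)
    qed
    have "alg_cost d s (comb alg) \<sigma> = serve_cost d (\<lambda>_. s) L"
      by (simp add: L_def alg_cost_choices)
    also have "\<dots> = (\<Sum>c\<in>insert None (Some ` I). serve_cost d (\<lambda>_. s) (filter (\<lambda>x. cls (snd x) = c) L))"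
      by (rule sc_sum[OF _ cl]) (simp add: fI)
    also have "\<dots> = serve_cost d (\<lambda>_. s) (filter (\<lambda>x. cls (snd x) = None) L)
        + (\<Sum>c\<in>Some ` I. serve_cost d (\<lambda>_. s) (filter (\<lambda>x. cls (snd x) = c) L))"
      by (rule sum.insert) (auto simp: fI)
    also have "serve_cost d (\<lambda>_. s) (filter (\<lambda>x. cls (snd x) = None) L) = 0"
    proof -
      have "serve_cost d (\<lambda>_. s) (filter (\<lambda>x. cls (snd x) = None) L)
          = plen d s (filter (\<lambda>r. r = s) \<sigma>)"
        by (simp add: L_def ALGN sc_single)
      also have "\<dots> = 0" by (rule plen_s) simp
      finally show ?thesis .
    qed
    also have "(\<Sum>c\<in>Some ` I. serve_cost d (\<lambda>_. s) (filter (\<lambda>x. cls (snd x) = c) L))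
        = (\<Sum>i\<in>I. serve_cost d (\<lambda>_. s) (filter (\<lambda>x. cls (snd x) = Some i) L))"
      by (rule sum.reindex_cong[of Some]) auto
    also have "\<dots> \<le> (\<Sum>i\<in>I. 4 * \<rho>p * opt_cost (dd i) s (filter (inR i) \<sigma>))"
    proof (rule sum_mono)
      fix i
      let ?si = "filter (inR i) \<sigma>"
      have siM: "set ?si \<subseteq> Mi i" using \<sigma>M by (auto simp: Mi_def)
      have "serve_cost d (\<lambda>_. s) (filter (\<lambda>x. cls (snd x) = Some i) L)
          = serve_cost d (\<lambda>_. s) (map (\<lambda>(r, j). (r, enc i j)) (zip ?si (choices (alg i) ?si)))"
        by (simp add: L_def ALGF)
      also have "\<dots> = serve_cost d ((\<lambda>_. s) \<circ> enc i) (zip ?si (choices (alg i) ?si))"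
        by (rule sc_rename[OF inj_enc])
      also have "\<dots> = serve_cost d (\<lambda>_. s) (zip ?si (choices (alg i) ?si))"
        by (simp add: comp_def)
      also have "\<dots> \<le> 4 * serve_cost (dd i) (\<lambda>_. s) (zip ?si (choices (alg i) ?si))"
      proof (rule sc_le4)
        show "\<forall>j. (\<lambda>_. s) j \<in> Mi i" using s_Mi by simp
        show "\<forall>x\<in>set (zip ?si (choices (alg i) ?si)). fst x \<in> Mi i"
        proof
          fix x assume "x \<in> set (zip ?si (choices (alg i) ?si))"
          then have "fst x \<in> set ?si" by (metis prod.collapse set_zip_leftD)
          then show "fst x \<in> Mi i" using siM by blast
        qed
      qed
      also have "serve_cost (dd i) (\<lambda>_. s) (zip ?si (choices (alg i) ?si)) = alg_cost (dd i) s (alg i) ?si"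
        by (simp add: alg_cost_choices)
      also have "\<dots> \<le> \<rho> * opt_cost (dd i) s ?si"
        using H[of i] siM by (simp add: strictly_competitive_alg_def)
      also have "\<dots> \<le> \<rho>p * opt_cost (dd i) s ?si"
        using opt_nonneg_gen[of "dd i" ?si, OF dd_nonneg] by (intro mult_right_mono) (simp_all add: \<rho>p_def)
      finally show "serve_cost d (\<lambda>_. s) (filter (\<lambda>x. cls (snd x) = Some i) L)
          \<le> 4 * \<rho>p * opt_cost (dd i) s ?si" by simp
    qed
    also have "\<dots> = 4 * \<rho>p * (\<Sum>i\<in>I. opt_cost (dd i) s (filter (inR i) \<sigma>))"
      by (simp add: sum_distrib_left)
    also have "\<dots> \<le> 4 * \<rho>p * (10 * opt_cost d s \<sigma>)"
      by (rule mult_left_mono[OF OPTLB[OF fI \<sigma>M]]) (simp add: \<rho>p_def)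
    finally show "alg_cost d s (comb alg) \<sigma> \<le> (40 * \<rho>p) * opt_cost d s \<sigma> + 0" by simp
  qed
  then show ?thesis unfolding infinite_server_competitive_def by blast
qed

end

theorem corollary3:
  fixes M :: "'a set" and d :: "'a \<Rightarrow> 'a \<Rightarrow> real" and s :: 'a
  assumes "\<exists>\<rho> :: real. \<forall>(M' :: 'a set) d' s'.
             Metric_space M' d' \<and> s' \<in> M' \<and>
             (\<forall>p \<in> M' - {s'}. \<forall>q \<in> M' - {s'}. d' s' p = d' s' q)
             \<longrightarrow> (\<exists>alg. strictly_competitive_alg M' d' s' \<rho> alg)"
    and "Metric_space M d" and "s \<in> M"
  shows "infinite_server_competitive M d s"
proof -
  interpret isp M d s
    by (rule isp.intro[OF assms(2)]) (rule isp_axioms.intro[OF assms(3)])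
  obtain \<rho> where R: "\<forall>(M' :: 'a set) d' s'.
             Metric_space M' d' \<and> s' \<in> M' \<and>
             (\<forall>p \<in> M' - {s'}. \<forall>q \<in> M' - {s'}. d' s' p = d' s' q)
             \<longrightarrow> (\<exists>alg. strictly_competitive_alg M' d' s' \<rho> alg)"
    using assms(1) by blast
  define alg where "alg i = (SOME a. strictly_competitive_alg (Mi i) (dd i) s \<rho> a)" for i
  have "strictly_competitive_alg (Mi i) (dd i) s \<rho> (alg i)" for i
  proof -
    have "\<exists>a. strictly_competitive_alg (Mi i) (dd i) s \<rho> a"
      using R dd_metric[of i] s_Mi[of i] dd_equi[of i] by blast
    then show ?thesis unfolding alg_def by (rule someI_ex)
  qed
  then show ?thesis by (rule main)
qed

end
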